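(* Let $N$ and $M$ be matroids on a common finite ground set $E$ such that every independent set of $M$ is independent in $N$. Then $N\ominus M=(N^*\vee M)^*$, i.e. the independent sets of $N\ominus M$ are exactly the independent sets of $(N^*\vee M)^*$.
   Context: For matroids $N,M$ on the same ground set $E$ with $\mathcal{L}(M)\subseteq\mathcal{L}(N)$, $N\ominus M=(E,\mathcal{L}(N\ominus M))$ where $\mathcal{L}(N\ominus M)=\{S: \exists$ a base $B_N$ of $N$ and a base $B_M$ of $M$ with $B_M\subseteq B_N$ and $S\subseteq B_N\setminus B_M\}$. The dual $N^*$ of a matroid $N$ on $E$ has as independent sets the subsets of $E\setminus B$ for bases $B$ of $N$. The union $A\vee B$ of matroids $A,B$ has ground set $E(A)\cup E(B)$ and independent sets $\{S\cup T: S\in\mathcal{L}(A),\ T\in\mathcal{L}(B)\}$. *)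

theory Defs
  imports Main
begin

definition matroid :: "'a set \<Rightarrow> 'a set set \<Rightarrow> bool" where
  "matroid E I \<longleftrightarrow>
     finite E \<and>
     (\<forall>X\<in>I. X \<subseteq> E) \<and>
     {} \<in> I \<and>
     (\<forall>X Y. X \<in> I \<and> Y \<subseteq> X \<longrightarrow> Y \<in> I) \<and>
     (\<forall>X Y. X \<in> I \<and> Y \<in> I \<and> card X < card Y \<longrightarrow> (\<exists>y\<in>Y - X. insert y X \<in> I))"

definition bases :: "'a set set \<Rightarrow> 'a set set" where
  "bases I = {B \<in> I. \<forall>X\<in>I. B \<subseteq> X \<longrightarrow> X = B}"

definition dual_indep :: "'a set \<Rightarrow> 'a set set \<Rightarrow> 'a set set" where
  "dual_indep E I = {S. \<exists>B\<in>bases I. S \<subseteq> E - B}"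

definition union_indep :: "'a set set \<Rightarrow> 'a set set \<Rightarrow> 'a set set" where
  "union_indep IA IB = {S \<union> T | S T. S \<in> IA \<and> T \<in> IB}"

definition ominus_indep :: "'a set set \<Rightarrow> 'a set set \<Rightarrow> 'a set set" where
  "ominus_indep IN IM =
     {S. \<exists>BN\<in>bases IN. \<exists>BM\<in>bases IM. BM \<subseteq> BN \<and> S \<subseteq> BN - BM}"

end

theory Submission
  imports Defs
begin

lemma m_sub: "matroid E I \<Longrightarrow> X \<in> I \<Longrightarrow> X \<subseteq> E"
  unfolding matroid_def by blast

lemma m_fin: "matroid E I \<Longrightarrow> X \<in> I \<Longrightarrow> finite X"
  unfolding matroid_def by (meson finite_subset)

lemma m_down: "matroid E I \<Longrightarrow> X \<in> I \<Longrightarrow> Y \<subseteq> X \<Longrightarrow> Y \<in> I"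
  unfolding matroid_def by blast

lemma m_aug: "matroid E I \<Longrightarrow> X \<in> I \<Longrightarrow> Y \<in> I \<Longrightarrow> card X < card Y \<Longrightarrow> \<exists>y\<in>Y - X. insert y X \<in> I"
  unfolding matroid_def by blast

lemma m_aug_gen:
  assumes m: "matroid E I"
  shows "\<And>X. X \<in> I \<Longrightarrow> Y \<in> I \<Longrightarrow> card Y - card X = n \<Longrightarrow> card X \<le> card Y \<Longrightarrow>
     \<exists>Z\<in>I. X \<subseteq> Z \<and> Z \<subseteq> X \<union> Y \<and> card Z = card Y"
proof (induction n)
  case 0
  then show ?case by auto
next
  case (Suc n)
  then have "card X < card Y" by auto
  then obtain y where y: "y \<in> Y - X" "insert y X \<in> I" using m_aug[OF m Suc.prems(1,2)] by blast
  have fX: "finite X" using m_fin[OF m Suc.prems(1)] .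
  have c: "card (insert y X) = Suc (card X)" using y fX by simp
  obtain Z where Z: "Z \<in> I" "insert y X \<subseteq> Z" "Z \<subseteq> insert y X \<union> Y" "card Z = card Y"
    using Suc.IH[OF y(2) Suc.prems(2)] c Suc.prems(3,4) \<open>card X < card Y\<close> by fastforce
  then show ?case using y by auto
qed

lemma m_aug2:
  assumes "matroid E I" "X \<in> I" "Y \<in> I" "card X \<le> card Y"
  shows "\<exists>Z\<in>I. X \<subseteq> Z \<and> Z \<subseteq> X \<union> Y \<and> card Z = card Y"
  using m_aug_gen[OF assms(1) assms(2,3) refl assms(4)] .

lemma base_card_ge:
  assumes m: "matroid E I" and B: "B \<in> bases I" and X: "X \<in> I"
  shows "card X \<le> card B"
proof (rule ccontr)
  assume "\<not> ?thesis"
  then have "card B < card X" by simp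
  moreover have "B \<in> I" using B unfolding bases_def by auto
  ultimately obtain y where y: "y \<in> X - B" "insert y B \<in> I" using m_aug[OF m _ X] by blast
  then show False using B unfolding bases_def by blast
qed

lemma base_of_card:
  assumes m: "matroid E I" and B: "B \<in> bases I" and X: "X \<in> I" and c: "card X = card B"
  shows "X \<in> bases I"
  unfolding bases_def
proof (intro CollectI conjI ballI impI)
  show "X \<in> I" by fact
  fix Y assume Y: "Y \<in> I" "X \<subseteq> Y"
  have "card Y \<le> card X" using base_card_ge[OF m B Y(1)] c by simp
  then show "Y = X" using Y m_fin[OF m Y(1)] by (metis card_seteq)
qed

lemma base_exists:
  assumes m: "matroid E I" and X: "X \<in> I"
  shows "\<exists>B\<in>bases I. X \<subseteq> B"
proof -
  have "finite I" using m unfolding matroid_def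
    by (meson Pow_iff finite_Pow_iff finite_subset subsetI)
  then obtain B where "B \<in> I" "X \<subseteq> B" "\<forall>b\<in>I. B \<subseteq> b \<longrightarrow> B = b"
    using finite_has_maximal2[OF _ X] by blast
  then show ?thesis unfolding bases_def by blast
qed

lemma union_mem:
  "V \<in> union_indep (dual_indep E IN) IM \<longleftrightarrow>
   (\<exists>S T B. V = S \<union> T \<and> B \<in> bases IN \<and> S \<subseteq> E - B \<and> T \<in> IM)"
  unfolding union_indep_def dual_indep_def by blast

theorem theorem3p4p2:
  fixes E :: "'a set" and IN IM :: "'a set set"
  assumes "matroid E IN" and "matroid E IM" and "IM \<subseteq> IN"
  shows "ominus_indep IN IM = dual_indep E (union_indep (dual_indep E IN) IM)"
proof -
  note mN = assms(1) and mM = assms(2) and sub = assms(3)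
  have fE: "finite E" using mN unfolding matroid_def by blast
  have bI: "B \<in> I" if "B \<in> bases I" for B and I :: "'a set set" using that unfolding bases_def by blast
  let ?U = "union_indep (dual_indep E IN) IM"
  show ?thesis
  proof
    show "ominus_indep IN IM \<subseteq> dual_indep E ?U"
    proof
      fix S assume "S \<in> ominus_indep IN IM"
      then obtain BN BM where BN: "BN \<in> bases IN" and BM: "BM \<in> bases IM" and BMN: "BM \<subseteq> BN"
        and S: "S \<subseteq> BN - BM" unfolding ominus_indep_def by blast
      have BNE: "BN \<subseteq> E" using m_sub[OF mN bI[OF BN]] .
      define U where "U = (E - BN) \<union> BM"
      have UU: "U \<in> ?U" unfolding U_def union_mem using BN bI[OF BM] by blast
      have cU: "card U = card E - card BN + card BM"
      proof -
        have "card U = card (E - BN) + card BM" unfolding U_def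
          using BMN fE m_fin[OF mM bI[OF BM]] by (subst card_Un_disjoint) auto
        also have "card (E - BN) = card E - card BN" using BNE fE by (simp add: card_Diff_subset finite_subset)
        finally show ?thesis .
      qed
      have "U \<in> bases ?U" unfolding bases_def
      proof (intro CollectI conjI ballI impI)
        show "U \<in> ?U" by fact
        fix V assume V: "V \<in> ?U" "U \<subseteq> V"
        then obtain S' T B where VV: "V = S' \<union> T" "B \<in> bases IN" "S' \<subseteq> E - B" "T \<in> IM"
          unfolding union_mem by blast
        have BE: "B \<subseteq> E" using m_sub[OF mN bI[OF VV(2)]] .
        have TE: "T \<subseteq> E" using m_sub[OF mM VV(4)] .
        have sub1: "V \<subseteq> (E - B) \<union> (T \<inter> B)" using VV TE by blast
        have cTB: "card (T \<inter> B) \<le> card BM"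
          using base_card_ge[OF mM BM m_down[OF mM VV(4)]] by blast
        have cB: "card B = card BN"
          using base_card_ge[OF mN BN bI[OF VV(2)]] base_card_ge[OF mN VV(2) bI[OF BN]] by simp
        have "card V \<le> card ((E - B) \<union> (T \<inter> B))"
          using sub1 fE TE by (intro card_mono) (auto intro: finite_subset)
        also have "\<dots> \<le> card (E - B) + card (T \<inter> B)" by (rule card_Un_le)
        also have "card (E - B) = card E - card B" using BE fE by (simp add: card_Diff_subset finite_subset)
        finally have "card V \<le> card U" using cTB cB cU by simp
        moreover have "finite V" by (rule finite_subset[OF sub1]) (use fE TE in \<open>auto intro: finite_subset\<close>)
        ultimately show "V = U" using V(2) by (metis card_seteq)
      qed
      moreover have "S \<subseteq> E - U" using S BNE unfolding U_def by blast
      ultimately show "S \<in> dual_indep E ?U" unfolding dual_indep_def by blast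
    qed
  next
    show "dual_indep E ?U \<subseteq> ominus_indep IN IM"
    proof
      fix S assume "S \<in> dual_indep E ?U"
      then obtain U where Ub: "U \<in> bases ?U" and S: "S \<subseteq> E - U" unfolding dual_indep_def by blast
      have Umax: "\<And>V. V \<in> ?U \<Longrightarrow> U \<subseteq> V \<Longrightarrow> V = U" using Ub unfolding bases_def by blast
      obtain S0 T B where UU: "U = S0 \<union> T" "B \<in> bases IN" "S0 \<subseteq> E - B" "T \<in> IM"
        using bI[OF Ub] unfolding union_mem by blast
      have BE: "B \<subseteq> E" using m_sub[OF mN bI[OF UU(2)]] .
      have TE: "T \<subseteq> E" using m_sub[OF mM UU(4)] .
      define T' where "T' = T \<inter> B"
      have T'I: "T' \<in> IM" unfolding T'_def using m_down[OF mM UU(4)] by blast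
      have "(E - B) \<union> T' \<in> ?U" unfolding union_mem using UU(2) T'I by blast
      moreover have "U \<subseteq> (E - B) \<union> T'" using UU TE unfolding T'_def by blast
      ultimately have Ueq: "U = (E - B) \<union> T'" using Umax by metis
      have T'B: "T' \<subseteq> B" unfolding T'_def by blast
      have "T' \<in> bases IM" unfolding bases_def
      proof (intro CollectI conjI ballI impI)
        show "T' \<in> IM" by fact
        fix X assume X: "X \<in> IM" "T' \<subseteq> X"
        show "X = T'"
        proof (rule ccontr)
          assume ne: "X \<noteq> T'"
          have "card T' < card X" using X ne m_fin[OF mM X(1)] by (intro psubset_card_mono) auto
          then obtain e where e: "e \<in> X - T'" "insert e T' \<in> IM" using m_aug[OF mM T'I X(1)] by blast
          have eE: "e \<in> E" using m_sub[OF mM X(1)] e by blast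
          show False
          proof (cases "e \<in> B")
            case True
            have "(E - B) \<union> insert e T' \<in> ?U" unfolding union_mem using UU(2) e by blast
            moreover have "U \<subseteq> (E - B) \<union> insert e T'" using Ueq by blast
            ultimately have "(E - B) \<union> insert e T' = U" using Umax by blast
            then show False using Ueq True e by blast
          next
            case False
            have eN: "insert e T' \<in> IN" using e sub by blast
            have "card (insert e T') \<le> card B" using base_card_ge[OF mN UU(2) eN] .
            then obtain Z where Z: "Z \<in> IN" "insert e T' \<subseteq> Z" "Z \<subseteq> insert e T' \<union> B" "card Z = card B"
              using m_aug2[OF mN eN bI[OF UU(2)]] by blast
            have Zb: "Z \<in> bases IN" using base_of_card[OF mN UU(2) Z(1,4)] .
            have fZ: "finite Z" using m_fin[OF mN Z(1)] .
            obtain f where f: "f \<in> B" "f \<notin> Z"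
            proof (rule ccontr)
              assume "\<not> thesis"
              then have "B \<subseteq> Z" using that by blast
              moreover have "e \<in> Z - B" using Z(2) False by blast
              ultimately have "B \<subset> Z" by blast
              then have "card B < card Z" using fZ by (rule psubset_card_mono[rotated])
              then show False using Z(4) by simp
            qed
            have "(E - Z) \<union> insert e T' \<in> ?U" unfolding union_mem using Zb e by blast
            moreover have "U \<subseteq> (E - Z) \<union> insert e T'" using Ueq Z(3) by blast
            ultimately have "(E - Z) \<union> insert e T' = U" using Umax by blast
            moreover have "f \<in> (E - Z) \<union> insert e T'" using f BE by blast
            moreover have "f \<notin> U" using Ueq f Z(2) by blast
            ultimately show False by blast
          qed
        qed
      qed
      moreover have "S \<subseteq> B - T'" using S Ueq BE by blast
      ultimately show "S \<in> ominus_indep IN IM" unfolding ominus_indep_def using UU(2) T'B by blast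
    qed
  qed
qed

end
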